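(* Let $\mathbb{K}$ be an algebraically closed field. Every triangular dual $3$-net in $PG(2,\mathbb{K})$ realizes a cyclic group which is isomorphic to a (finite) subgroup of the multiplicative group $\mathbb{K}^*$.
   Context: A dual $3$-net of order $n$ in $PG(2,\mathbb{K})$ is a triple $(\Lambda_1,\Lambda_2,\Lambda_3)$ of pairwise disjoint point sets, each of size $n$, such that every line meeting two distinct components meets each component in exactly one point. It realizes a group $(G,\cdot)$ if there are bijections $\alpha:G\to\Lambda_1$, $\beta:G\to\Lambda_2$, $\gamma:G\to\Lambda_3$ such that $a\cdot b=c$ if and only if $\alpha(a),\beta(b),\gamma(c)$ are collinear. A dual $3$-net of order $n\ge4$ is triangular if its three components lie respectively on the three sides of a triangle. *)

theory Defs
  imports "HOL-Computational_Algebra.Polynomial" "HOL-Algebra.Elementary_Groups"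
begin

type_synonym 'a vec3 = "'a \<times> 'a \<times> 'a"

definition smult3 :: "'a::field \<Rightarrow> 'a vec3 \<Rightarrow> 'a vec3" where
  "smult3 c v = (case v of (x, y, z) \<Rightarrow> (c * x, c * y, c * z))"

definition dot3 :: "'a::field vec3 \<Rightarrow> 'a vec3 \<Rightarrow> 'a" where
  "dot3 u v = (case u of (a, b, c) \<Rightarrow> case v of (x, y, z) \<Rightarrow> a * x + b * y + c * z)"

definition ppoint :: "'a::field vec3 \<Rightarrow> 'a vec3 set" where
  "ppoint v = {smult3 c v | c. c \<noteq> 0}"

definition PG2 :: "'a::field vec3 set set" where
  "PG2 = {ppoint v | v. v \<noteq> (0, 0, 0)}"

definition pline :: "'a::field vec3 \<Rightarrow> 'a vec3 set set" where
  "pline a = {P \<in> PG2. \<forall>v \<in> P. dot3 a v = 0}"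

definition Lines :: "'a::field vec3 set set set" where
  "Lines = {pline a | a. a \<noteq> (0, 0, 0)}"

definition collinear3 :: "'a::field vec3 set \<Rightarrow> 'a vec3 set \<Rightarrow> 'a vec3 set \<Rightarrow> bool" where
  "collinear3 P Q R \<longleftrightarrow> (\<exists>l \<in> Lines. P \<in> l \<and> Q \<in> l \<and> R \<in> l)"

definition dual_3net :: "'a::field vec3 set set \<Rightarrow> 'a vec3 set set \<Rightarrow> 'a vec3 set set \<Rightarrow> nat \<Rightarrow> bool" where
  "dual_3net L1 L2 L3 n \<longleftrightarrow>
     (let \<Lambda> = [L1, L2, L3] in
       (\<forall>i < 3. \<Lambda> ! i \<subseteq> PG2 \<and> finite (\<Lambda> ! i) \<and> card (\<Lambda> ! i) = n) \<and>
       (\<forall>i < 3. \<forall>j < 3. i \<noteq> j \<longrightarrow> \<Lambda> ! i \<inter> \<Lambda> ! j = {}) \<and>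
       (\<forall>l \<in> Lines. \<forall>i < 3. \<forall>j < 3.
          i \<noteq> j \<and> l \<inter> \<Lambda> ! i \<noteq> {} \<and> l \<inter> \<Lambda> ! j \<noteq> {} \<longrightarrow>
          (\<forall>k < 3. \<exists>!P. P \<in> l \<inter> \<Lambda> ! k)))"

definition triangular_dual_3net :: "'a::field vec3 set set \<Rightarrow> 'a vec3 set set \<Rightarrow> 'a vec3 set set \<Rightarrow> nat \<Rightarrow> bool" where
  "triangular_dual_3net L1 L2 L3 n \<longleftrightarrow> dual_3net L1 L2 L3 n \<and> n \<ge> 4 \<and>
     (\<exists>l1 \<in> Lines. \<exists>l2 \<in> Lines. \<exists>l3 \<in> Lines.
        l1 \<noteq> l2 \<and> l1 \<noteq> l3 \<and> l2 \<noteq> l3 \<and> l1 \<inter> l2 \<inter> l3 = {} \<and>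
        L1 \<subseteq> l1 \<and> L2 \<subseteq> l2 \<and> L3 \<subseteq> l3)"

definition realizes :: "'a::field vec3 set set \<Rightarrow> 'a vec3 set set \<Rightarrow> 'a vec3 set set \<Rightarrow> ('g, 'b) monoid_scheme \<Rightarrow> bool" where
  "realizes L1 L2 L3 G \<longleftrightarrow> group G \<and>
     (\<exists>\<alpha> \<beta> \<gamma>. bij_betw \<alpha> (carrier G) L1 \<and> bij_betw \<beta> (carrier G) L2 \<and> bij_betw \<gamma> (carrier G) L3 \<and>
        (\<forall>a \<in> carrier G. \<forall>b \<in> carrier G. \<forall>c \<in> carrier G.
           a \<otimes>\<^bsub>G\<^esub> b = c \<longleftrightarrow> collinear3 (\<alpha> a) (\<beta> b) (\<gamma> c)))"

definition Kstar :: "'a::field monoid" where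
  "Kstar = \<lparr>carrier = UNIV - {0}, mult = (*), one = 1\<rparr>"

end

theory Submission
  imports Defs "HOL-Algebra.Multiplicative_Group"
begin



context group begin

lemma num_elems_ord_eq_phi'_gen:
  assumes finite: "finite (carrier G)"
    and rb: "\<And>d. d > 0 \<Longrightarrow> card {x \<in> carrier G. x [^] d = \<one>} \<le> d"
    and dvd: "d dvd order G"
    and exists: "\<exists>a\<in>carrier G. ord a = d"
  shows "card {a \<in> carrier G. ord a = d} = phi' d"
proof -
  from exists
  obtain a where a: "a \<in> carrier G" and ord_a: "ord a = d"
    by auto
  have "0 < order G" unfolding order_def using finite one_closed
    by (metis card_gt_0_iff empty_iff)
  then have d0: "d > 0" using dvd dvd_nat_bounds by blast
  have set_eq1: "{a[^]n| n. n \<in> {1 .. d}} = {x \<in> carrier G. x [^] d = \<one>}"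
  proof (rule card_seteq)
    show "finite {x \<in> carrier G. x [^] d = \<one>}" using finite by auto
    show "{a[^]n| n. n \<in> {1 ..d}} \<subseteq> {x \<in> carrier G. x[^]d = \<one>}"
    proof
      fix x assume "x \<in> {a[^]n | n. n \<in> {1 .. d}}"
      then obtain n where n: "x = a[^]n \<and> n \<in> {1 .. d}" by auto
      have "x[^]d =(a[^]d)[^]n" using n a ord_a by (simp add:nat_pow_pow mult.commute)
      hence "x[^]d = \<one>" using ord_a pow_ord_eq_1[OF a] by fastforce
      thus "x \<in> {x \<in> carrier G. x[^]d = \<one>}" using nat_pow_closed[OF a] n by blast
    qed
    show "card {x \<in> carrier G. x [^] d = \<one>} \<le> card {a[^]n | n. n \<in> {1 .. d}}"
    proof -
      have *: "{a[^]n | n. n \<in> {1 .. d }} = ((\<lambda> n. a[^]n) ` {1 .. d})" by auto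
      have "card {x \<in> carrier G. x [^] d = \<one>} \<le> d" using rb d0 by blast
      thus ?thesis using ord_inj'[OF a] ord_a * by (simp add: card_image)
    qed
  qed
  have set_eq2: "{x \<in> carrier G . ord x = d}
                = (\<lambda> n . a[^]n) ` {n \<in> {1 .. d}. ord (a[^]n) = d}" (is "?L = ?R")
  proof
    have "x \<in> ?R" if x: "x \<in> (carrier G) \<and> ord x = d" for x
    proof -
      from that have "x \<in> {x \<in> carrier G. x [^] d = \<one>}"
        by (simp add: pow_ord_eq_1[of x, symmetric])
      then obtain n where n: "x = a[^]n \<and> n \<in> {1 .. d}" using set_eq1 by blast
      then show ?thesis using x by fast
    qed
    thus "?L \<subseteq> ?R" by blast
    show "?R \<subseteq> ?L" using a by auto
  qed
  have "inj_on (\<lambda> n . a[^]n) {n \<in> {1 .. d}. ord (a[^]n) = d}"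
    using ord_inj'[OF a, unfolded ord_a] unfolding inj_on_def by fast
  hence "card ((\<lambda>n. a[^]n) ` {n \<in> {1 .. d}. ord (a[^]n) = d})
         = card {k \<in> {1 .. d}. ord (a[^]k) = d}"
         using card_image by blast
  thus ?thesis using set_eq2 pow_ord_eq_ord_iff[OF finite \<open>a \<in> _\<close>, unfolded ord_a]
    by (simp add: phi'_def)
qed

lemma cyclic_if_roots_bound:
  assumes finite: "finite (carrier G)"
    and rb: "\<And>d. d > 0 \<Longrightarrow> card {x \<in> carrier G. x [^] d = \<one>} \<le> d"
  shows "\<exists> a \<in> carrier G . carrier G = {a[^]i | i::nat . i \<in> UNIV}"
proof -
  let ?N = "\<lambda> x . card {a \<in> carrier G. ord a  = x}"
  have *: "0 < order G" unfolding order_def using finite one_closed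
    by (metis card_gt_0_iff empty_iff)
  have fin: "finite {d. d dvd order G }" using dvd_nat_bounds[OF *] by force
  have "(\<Sum>d | d dvd order G. ?N d)
      = card (UN d:{d . d dvd order G }. {a \<in> carrier G. ord a  = d})"
      (is "_ = card ?U")
    using fin finite by (subst card_UN_disjoint) auto
  also have "?U = carrier G"
  proof
    have "x \<in> ?U" if x: "x \<in> carrier G" for x
    proof -
      from that have "ord x dvd order G"
        using ord_dvd_group_order by blast
      then show ?thesis
        using x by blast
    qed
    thus "carrier G \<subseteq> ?U" by blast
  qed auto
  also have "card ... = order G"
    by (simp add: order_def)
  finally have sum_Ns_eq: "(\<Sum>d | d dvd order G. ?N d) = order G" .
  have "card {a \<in> carrier G. ord a = d} \<le> phi' d"
    if d: "d dvd order G" for d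
  proof (cases "card {a \<in> carrier G. ord a = d} = 0")
    case True
    thus ?thesis by presburger
  next
    case False
    hence "\<exists>a \<in> carrier G. ord a = d" by (auto simp: card_eq_0_iff)
    thus ?thesis using num_elems_ord_eq_phi'_gen[OF finite rb d] by auto
  qed
  hence all_le: "\<And>i. i \<in> {d. d dvd order G }
        \<Longrightarrow> (\<lambda>i. card {a \<in> carrier G. ord a = i}) i \<le> (\<lambda>i. phi' i) i" by fast
  hence le: "(\<Sum>i | i dvd order G. ?N i)
            \<le> (\<Sum>i | i dvd order G. phi' i)"
            using sum_mono[of "{d .  d dvd order G}"
                  "\<lambda>i. card {a \<in> carrier G. ord a = i}"] by presburger
  have "order G = (\<Sum>d | d dvd order G. phi' d)" using *
    by (simp add: sum_phi'_factors)
  hence eq: "(\<Sum>i | i dvd order G. ?N i)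
          = (\<Sum>i | i dvd order G. phi' i)" using le sum_Ns_eq by presburger
  have "\<And>i. i \<in> {d. d dvd order G } \<Longrightarrow> ?N i = (\<lambda>i. phi' i) i"
  proof (rule ccontr)
    fix i
    assume i1: "i \<in> {d. d dvd order G}" and "?N i \<noteq> phi' i"
    hence "?N i = 0"
      using num_elems_ord_eq_phi'_gen[OF finite rb, of i] by (auto simp: card_eq_0_iff)
    moreover  have "0 < i" using * i1 by (simp add: dvd_nat_bounds[of "order G" i])
    ultimately have "?N i < phi' i" using phi'_nonzero by presburger
    hence "(\<Sum>i | i dvd order G. ?N i)
         < (\<Sum>i | i dvd order G. phi' i)"
      using sum_strict_mono_ex1[OF fin, of "?N" "\<lambda> i . phi' i"]
            i1 all_le by auto
    thus False using eq by force
  qed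
  hence "?N (order G) > 0" using * by (simp add: phi'_nonzero)
  then obtain a where a: "a \<in> carrier G" and a_ord: "ord a = order G"
    by (auto simp add: card_gt_0_iff)
  hence set_eq: "{a[^]i | i::nat. i \<in> UNIV} = (\<lambda>x. a[^]x) ` {0 .. ord a - 1}"
    using ord_elems[OF finite] by auto
  have card_eq: "card ((\<lambda>x. a[^]x) ` {0 .. ord a - 1}) = card {0 .. ord a - 1}"
    by (intro card_image ord_inj finite a)
  hence "card ((\<lambda> x . a[^]x) ` {0 .. ord a - 1}) = card {0 ..order G - 1}"
    using assms by (simp add: card_eq a_ord)
  hence card_R_minus_1: "card {a[^]i | i::nat. i \<in> UNIV} =  order G"
    using * by (subst set_eq) auto
  have **: "{a[^]i | i::nat. i \<in> UNIV} \<subseteq> carrier G"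
    using nat_pow_closed[OF a] by auto
  with _ have "carrier G = {a[^]i|i::nat. i \<in> UNIV}"
    by (rule card_seteq[symmetric]) (simp_all add: card_R_minus_1 finite order_def del: UNIV_I)
  thus ?thesis using a by blast
qed

lemma cyclic_group_if_roots_bound:
  assumes finite: "finite (carrier G)"
    and rb: "\<And>d. d > 0 \<Longrightarrow> card {x \<in> carrier G. x [^] d = \<one>} \<le> d"
  shows "cyclic_group G"
proof -
  obtain a where a: "a \<in> carrier G" and c: "carrier G = {a[^]i | i::nat . i \<in> UNIV}"
    using cyclic_if_roots_bound[OF assms] by blast
  have "carrier G = range (\<lambda>n::int. a [^] n)"
  proof
    show "carrier G \<subseteq> range (\<lambda>n::int. a [^] n)"
    proof
      fix x assume "x \<in> carrier G"
      then obtain i::nat where "x = a [^] i" using c by blast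
      then have "x = a [^] (int i)" by (simp add: int_pow_int)
      then show "x \<in> range (\<lambda>n::int. a [^] n)" by blast
    qed
    show "range (\<lambda>n::int. a [^] n) \<subseteq> carrier G" using a by auto
  qed
  then show ?thesis using a cyclic_group by blast
qed

end



lemma Kstar_simps [simp]: "carrier (Kstar::'a::field monoid) = UNIV - {0}"
  "monoid.mult (Kstar::'a::field monoid) = (*)" "one (Kstar::'a::field monoid) = 1"
  by (simp_all add: Kstar_def)

lemma group_Kstar: "group (Kstar::'a::field monoid)"
proof (rule groupI)
  fix x :: 'a assume "x \<in> carrier Kstar"
  then show "\<exists>y\<in>carrier Kstar. y \<otimes>\<^bsub>Kstar\<^esub> x = \<one>\<^bsub>Kstar\<^esub>"
    by (intro bexI[of _ "inverse x"]) auto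
qed (auto simp: mult.assoc)

lemma inv_Kstar: "(x::'a::field) \<noteq> 0 \<Longrightarrow> inv\<^bsub>Kstar\<^esub> x = inverse x"
  using group.inv_equality[OF group_Kstar, of "inverse x" x] by auto

lemma subgroup_KstarI:
  fixes H :: "'a::field set"
  assumes fin: "finite H" and nz: "0 \<notin> H" and one: "1 \<in> H"
    and cl: "\<And>x y. x \<in> H \<Longrightarrow> y \<in> H \<Longrightarrow> x * y \<in> H"
  shows "subgroup H (Kstar::'a monoid)"
proof
  show "H \<subseteq> carrier Kstar" using nz by auto
  show "\<And>x y. x \<in> H \<Longrightarrow> y \<in> H \<Longrightarrow> x \<otimes>\<^bsub>Kstar\<^esub> y \<in> H" using cl by simp
  show "\<one>\<^bsub>Kstar\<^esub> \<in> H" using one by simp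
  fix x assume x: "x \<in> H"
  then have x0: "x \<noteq> 0" using nz by auto
  have inj: "inj_on ((*) x) H" using x0 by (auto simp: inj_on_def)
  have "(*) x ` H \<subseteq> H" using cl x by auto
  then have "(*) x ` H = H" using inj fin by (simp add: card_image card_subset_eq)
  then obtain h where h: "h \<in> H" "x * h = 1" using one by (metis imageE)
  then have "h = inverse x" using x0 using inverse_unique[symmetric] by blast
  then show "inv\<^bsub>Kstar\<^esub> x \<in> H" using h inv_Kstar[OF x0] by metis
qed

lemma pow_Kstar_sub: "x [^]\<^bsub>(Kstar::'a::field monoid)\<lparr>carrier := H\<rparr>\<^esub> (n::nat) = x ^ n"
  by (induct n) (simp_all add: Kstar_def mult.commute)

lemma cyclic_finite_subgroup_Kstar:
  fixes H :: "'a::field set"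
  assumes sg: "subgroup H (Kstar::'a monoid)" and fin: "finite H"
  shows "cyclic_group ((Kstar::'a monoid)\<lparr>carrier := H\<rparr>)"
proof -
  interpret G: group "(Kstar::'a monoid)\<lparr>carrier := H\<rparr>"
    using subgroup.subgroup_is_group[OF sg group_Kstar] .
  show ?thesis
  proof (rule G.cyclic_group_if_roots_bound)
    show "finite (carrier (Kstar\<lparr>carrier := H\<rparr>))" using fin by simp
    fix d :: nat assume d: "d > 0"
    let ?p = "Polynomial.monom (1::'a) d - 1"
    have deg: "degree ?p \<le> d" by (intro degree_diff_le) (auto simp: degree_monom_le)
    have "poly ?p 0 \<noteq> 0" using d by (simp add: poly_monom zero_power)
    then have p0: "?p \<noteq> 0" by auto
    have "{x \<in> carrier (Kstar\<lparr>carrier := H\<rparr>). x [^]\<^bsub>Kstar\<lparr>carrier := H\<rparr>\<^esub> d = \<one>\<^bsub>Kstar\<lparr>carrier := H\<rparr>\<^esub>}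
          \<subseteq> {x. poly ?p x = 0}"
      by (auto simp: pow_Kstar_sub poly_monom)
    then have "card {x \<in> carrier (Kstar\<lparr>carrier := H\<rparr>). x [^]\<^bsub>Kstar\<lparr>carrier := H\<rparr>\<^esub> d = \<one>\<^bsub>Kstar\<lparr>carrier := H\<rparr>\<^esub>}
          \<le> card {x. poly ?p x = 0}"
      by (intro card_mono poly_roots_finite p0)
    also have "\<dots> \<le> d" using card_poly_roots_bound[OF p0] deg by simp
    finally show "card {x \<in> carrier (Kstar\<lparr>carrier := H\<rparr>). x [^]\<^bsub>Kstar\<lparr>carrier := H\<rparr>\<^esub> d = \<one>\<^bsub>Kstar\<lparr>carrier := H\<rparr>\<^esub>} \<le> d" .
  qed
qed




lemma mult_image_eq:
  fixes X Y Z :: "'a::field set"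
  assumes fY: "finite Y" and fZ: "finite Z" and c: "card Y = card Z" and x0: "x \<noteq> 0"
    and sub: "(*) x ` Y \<subseteq> Z"
  shows "(*) x ` Y = Z"
proof -
  have "inj_on ((*) x) Y" using x0 by (auto simp: inj_on_def)
  then have "card ((*) x ` Y) = card Z" using c by (simp add: card_image)
  then show ?thesis using sub fZ by (simp add: card_subset_eq)
qed

lemma triple_structure:
  fixes X Y Z :: "'a::field set"
  assumes fX: "finite X" and fY: "finite Y" and fZ: "finite Z"
    and cX: "card X = n" and cY: "card Y = n" and cZ: "card Z = n" and n0: "n > 0"
    and nX: "0 \<notin> X" and nY: "0 \<notin> Y"
    and cl: "\<And>x y. x \<in> X \<Longrightarrow> y \<in> Y \<Longrightarrow> x * y \<in> Z"
  shows "\<exists>H x0 y0. finite H \<and> 0 \<notin> H \<and> 1 \<in> H \<and> (\<forall>a\<in>H. \<forall>b\<in>H. a * b \<in> H) \<and>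
            x0 \<noteq> 0 \<and> y0 \<noteq> 0 \<and>
            X = (*) x0 ` H \<and> Y = (*) y0 ` H \<and> Z = (*) (x0 * y0) ` H"
proof -
  obtain x0 where x0: "x0 \<in> X" using cX n0 fX by (metis card.empty ex_in_conv less_irrefl)
  obtain y0 where y0: "y0 \<in> Y" using cY n0 fY by (metis card.empty ex_in_conv less_irrefl)
  have x00: "x0 \<noteq> 0" using x0 nX by auto
  have y00: "y0 \<noteq> 0" using y0 nY by auto
  have ZX: "Z = (*) x ` Y" if "x \<in> X" for x
    using mult_image_eq[OF fY fZ, of x] that cl cY cZ nX by fastforce
  have ZY: "Z = (\<lambda>x. x * y) ` X" if "y \<in> Y" for y
  proof -
    have "(*) y ` X = Z"
      using mult_image_eq[OF fX fZ, of y] that cl cX cZ nY by (fastforce simp: mult.commute)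
    then show ?thesis by (simp add: mult.commute)
  qed
  define H where "H = (\<lambda>x. x / x0) ` X"
  have XH: "X = (*) x0 ` H" unfolding H_def using x00 by (force simp: image_image)
  have YH: "Y = (*) y0 ` H"
  proof
    show "Y \<subseteq> (*) y0 ` H"
    proof
      fix y assume y: "y \<in> Y"
      have "x0 * y \<in> Z" using cl x0 y by auto
      then obtain x where x: "x \<in> X" "x0 * y = x * y0" using ZY[OF y0] by auto
      then have "y = y0 * (x / x0)" using x00 by (simp add: field_simps)
      moreover have "x / x0 \<in> H" unfolding H_def using x by auto
      ultimately show "y \<in> (*) y0 ` H" by blast
    qed
    show "(*) y0 ` H \<subseteq> Y"
    proof
      fix w assume "w \<in> (*) y0 ` H"
      then obtain x where x: "x \<in> X" "w = y0 * (x / x0)" unfolding H_def by auto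
      have "x * y0 \<in> Z" using cl x y0 by auto
      then obtain y where y: "y \<in> Y" "x * y0 = x0 * y" using ZX[OF x0] by auto
      then have "w = y" using x x00 by (simp add: field_simps)
      then show "w \<in> Y" using y by auto
    qed
  qed
  have ZH: "Z = (*) (x0 * y0) ` H"
  proof -
    have "Z = (\<lambda>x. x * y0) ` X" using ZY[OF y0] .
    also have "\<dots> = (*) (x0 * y0) ` H" unfolding H_def using x00
      by (auto simp: image_image field_simps)
    finally show ?thesis .
  qed
  have "finite H" unfolding H_def using fX by auto
  moreover have "0 \<notin> H" unfolding H_def using nX x00 by auto
  moreover have "1 \<in> H" unfolding H_def using x0 x00 by force
  moreover have "\<forall>a\<in>H. \<forall>b\<in>H. a * b \<in> H"
  proof (intro ballI)
    fix a b assume a: "a \<in> H" and b: "b \<in> H"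
    have "x0 * a \<in> X" using a XH by auto
    moreover have "y0 * b \<in> Y" using b YH by auto
    ultimately have "(x0 * a) * (y0 * b) \<in> Z" using cl by auto
    then obtain c where c: "c \<in> H" "(x0 * a) * (y0 * b) = (x0 * y0) * c" using ZH by auto
    then have "a * b = c" using x00 y00 by (simp add: field_simps)
    then show "a * b \<in> H" using c by auto
  qed
  ultimately show ?thesis using x00 y00 XH YH ZH by blast
qed




definition cross3 :: "'a::field vec3 \<Rightarrow> 'a vec3 \<Rightarrow> 'a vec3" where
  "cross3 u v = (case u of (a1, a2, a3) \<Rightarrow> case v of (b1, b2, b3) \<Rightarrow>
     (a2 * b3 - a3 * b2, a3 * b1 - a1 * b3, a1 * b2 - a2 * b1))"

definition det3 :: "'a::field vec3 \<Rightarrow> 'a vec3 \<Rightarrow> 'a vec3 \<Rightarrow> 'a" where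
  "det3 p q r = dot3 p (cross3 q r)"

definition rep :: "'a::field vec3 set \<Rightarrow> 'a vec3" where
  "rep P = (SOME v. v \<noteq> (0,0,0) \<and> P = ppoint v)"

lemma smult3_smult3: "smult3 c (smult3 d v) = smult3 (c * d) v"
  by (cases v) (auto simp: smult3_def mult.assoc)

lemma smult3_1: "smult3 1 v = v"
  by (cases v) (auto simp: smult3_def)

lemma dot3_smult3: "dot3 a (smult3 c v) = c * dot3 a v"
  by (cases v; cases a) (auto simp: smult3_def dot3_def algebra_simps)

lemma smult3_nz: "v \<noteq> (0,0,0) \<Longrightarrow> (c::'a::field) \<noteq> 0 \<Longrightarrow> smult3 c v \<noteq> (0,0,0)"
  by (cases v) (auto simp: smult3_def)

lemma in_ppoint: "v \<in> ppoint v"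
  unfolding ppoint_def by (rule CollectI, rule exI[of _ 1]) (simp add: smult3_1)

lemma ppoint_smult3: "(c::'a::field) \<noteq> 0 \<Longrightarrow> ppoint (smult3 c v) = ppoint v"
proof -
  assume c: "c \<noteq> 0"
  show ?thesis
  proof
    show "ppoint (smult3 c v) \<subseteq> ppoint v"
      unfolding ppoint_def using c by (auto simp: smult3_smult3)
    show "ppoint v \<subseteq> ppoint (smult3 c v)"
    proof
      fix w assume "w \<in> ppoint v"
      then obtain d where d: "d \<noteq> 0" "w = smult3 d v" unfolding ppoint_def by auto
      then have "w = smult3 (d / c) (smult3 c v)" using c by (simp add: smult3_smult3)
      then show "w \<in> ppoint (smult3 c v)" unfolding ppoint_def using d c by auto
    qed
  qed
qed

lemma rep: assumes "P \<in> PG2" shows "rep P \<noteq> (0,0,0)" "P = ppoint (rep P)"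
proof -
  have "\<exists>v. v \<noteq> (0,0,0) \<and> P = ppoint v" using assms unfolding PG2_def by auto
  then have "rep P \<noteq> (0,0,0) \<and> P = ppoint (rep P)" unfolding rep_def by (rule someI_ex)
  then show "rep P \<noteq> (0,0,0)" "P = ppoint (rep P)" by auto
qed

lemma ppoint_in_PG2: "v \<noteq> (0,0,0) \<Longrightarrow> ppoint v \<in> PG2"
  unfolding PG2_def by blast

lemma in_pline_iff: assumes "P \<in> PG2" shows "P \<in> pline a \<longleftrightarrow> dot3 a (rep P) = 0"
proof
  assume "P \<in> pline a"
  moreover have "rep P \<in> P" using rep[OF assms] in_ppoint by metis
  ultimately show "dot3 a (rep P) = 0" unfolding pline_def by auto
next
  assume h: "dot3 a (rep P) = 0"
  have "\<forall>v\<in>P. dot3 a v = 0"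
  proof
    fix v assume "v \<in> P"
    then obtain c where "v = smult3 c (rep P)" using rep(2)[OF assms] unfolding ppoint_def by auto
    then show "dot3 a v = 0" using h by (simp add: dot3_smult3)
  qed
  then show "P \<in> pline a" using assms unfolding pline_def by auto
qed

lemma cross_zero:
  fixes p q :: "'a::field vec3"
  assumes p: "p \<noteq> (0,0,0)" and q: "q \<noteq> (0,0,0)" and c: "cross3 p q = (0,0,0)"
  shows "\<exists>c. c \<noteq> 0 \<and> q = smult3 c p"
proof -
  obtain p1 p2 p3 where pp: "p = (p1,p2,p3)" by (cases p) auto
  obtain q1 q2 q3 where qq: "q = (q1,q2,q3)" by (cases q) auto
  have e: "p2 * q3 = p3 * q2" "p3 * q1 = p1 * q3" "p1 * q2 = p2 * q1"
    using c by (auto simp: pp qq cross3_def)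
  consider "p1 \<noteq> 0" | "p2 \<noteq> 0" | "p3 \<noteq> 0" using p pp by auto
  then show ?thesis
  proof cases
    case 1
    have "q = smult3 (q1/p1) p" using 1 e by (auto simp: pp qq smult3_def field_simps)
    moreover then have "q1/p1 \<noteq> 0" using q by (auto simp: smult3_def)
    ultimately show ?thesis by blast
  next
    case 2
    have "q = smult3 (q2/p2) p" using 2 e by (auto simp: pp qq smult3_def field_simps)
    moreover then have "q2/p2 \<noteq> 0" using q by (auto simp: smult3_def)
    ultimately show ?thesis by blast
  next
    case 3
    have "q = smult3 (q3/p3) p" using 3 e by (auto simp: pp qq smult3_def field_simps)
    moreover then have "q3/p3 \<noteq> 0" using q by (auto simp: smult3_def)
    ultimately show ?thesis by blast
  qed
qed

lemma det3_kernel: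
  fixes b p q r :: "'a::field vec3"
  assumes h: "dot3 b p = 0" "dot3 b q = 0" "dot3 b r = 0" and b: "b \<noteq> (0,0,0)"
  shows "det3 p q r = 0"
proof -
  obtain b1 b2 b3 where bb: "b = (b1,b2,b3)" by (cases b) auto
  obtain p1 p2 p3 where pp: "p = (p1,p2,p3)" by (cases p) auto
  obtain q1 q2 q3 where qq: "q = (q1,q2,q3)" by (cases q) auto
  obtain r1 r2 r3 where rr: "r = (r1,r2,r3)" by (cases r) auto
  let ?D = "det3 p q r"
  have D: "?D = p1 * (q2 * r3 - q3 * r2) + p2 * (q3 * r1 - q1 * r3) + p3 * (q1 * r2 - q2 * r1)"
    by (simp add: det3_def dot3_def cross3_def pp qq rr)
  have h': "b1 * p1 + b2 * p2 + b3 * p3 = 0" "b1 * q1 + b2 * q2 + b3 * q3 = 0" "b1 * r1 + b2 * r2 + b3 * r3 = 0"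
    using h by (simp_all add: dot3_def bb pp qq rr)
  have e1: "?D * b1 = (b1 * p1 + b2 * p2 + b3 * p3) * (q2 * r3 - q3 * r2) + (b1 * q1 + b2 * q2 + b3 * q3) * (r2 * p3 - r3 * p2) + (b1 * r1 + b2 * r2 + b3 * r3) * (p2 * q3 - p3 * q2)"
    unfolding D by (simp add: algebra_simps)
  have e2: "?D * b2 = (b1 * p1 + b2 * p2 + b3 * p3) * (q3 * r1 - q1 * r3) + (b1 * q1 + b2 * q2 + b3 * q3) * (r3 * p1 - r1 * p3) + (b1 * r1 + b2 * r2 + b3 * r3) * (p3 * q1 - p1 * q3)"
    unfolding D by (simp add: algebra_simps)
  have e3: "?D * b3 = (b1 * p1 + b2 * p2 + b3 * p3) * (q1 * r2 - q2 * r1) + (b1 * q1 + b2 * q2 + b3 * q3) * (r1 * p2 - r2 * p1) + (b1 * r1 + b2 * r2 + b3 * r3) * (p1 * q2 - p2 * q1)"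
    unfolding D by (simp add: algebra_simps)
  have "?D * b1 = 0" "?D * b2 = 0" "?D * b3 = 0" using e1 e2 e3 h' by simp_all
  then show ?thesis using b bb by auto
qed

lemma cross_dot1: "dot3 (cross3 p q) p = (0::'a::field)"
  by (cases p; cases q) (simp add: dot3_def cross3_def algebra_simps)
lemma cross_dot2: "dot3 (cross3 p q) q = (0::'a::field)"
  by (cases p; cases q) (simp add: dot3_def cross3_def algebra_simps)
lemma cross_dot3: "dot3 (cross3 p q) r = (det3 p q r::'a::field)"
  by (cases p; cases q; cases r) (simp add: det3_def dot3_def cross3_def algebra_simps)
lemma det3_pqp: "det3 p q p = (0::'a::field)"
  by (metis cross_dot1 cross_dot3)

lemma collinear_iff:
  assumes P: "P \<in> PG2" and Q: "Q \<in> PG2" and R: "R \<in> PG2" and PQ: "P \<noteq> Q"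
  shows "collinear3 P Q R \<longleftrightarrow> det3 (rep P) (rep Q) (rep R) = 0"
proof
  assume "collinear3 P Q R"
  then obtain b where b: "b \<noteq> (0,0,0)" "P \<in> pline b" "Q \<in> pline b" "R \<in> pline b"
    unfolding collinear3_def Lines_def by auto
  have "dot3 b (rep P) = 0" using b(2) in_pline_iff[OF P] by blast
  moreover have "dot3 b (rep Q) = 0" using b(3) in_pline_iff[OF Q] by blast
  moreover have "dot3 b (rep R) = 0" using b(4) in_pline_iff[OF R] by blast
  ultimately show "det3 (rep P) (rep Q) (rep R) = 0" using det3_kernel b(1) by blast
next
  assume h: "det3 (rep P) (rep Q) (rep R) = 0"
  define b where "b = cross3 (rep P) (rep Q)"
  have bnz: "b \<noteq> (0,0,0)"
  proof
    assume "b = (0,0,0)"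
    then obtain c where "c \<noteq> 0" "rep Q = smult3 c (rep P)"
      using cross_zero rep P Q b_def by metis
    then have "Q = P" using rep P Q ppoint_smult3 by metis
    then show False using PQ by simp
  qed
  have "dot3 b (rep P) = 0" "dot3 b (rep Q) = 0" "dot3 b (rep R) = 0"
    using h unfolding b_def by (simp_all add: cross_dot1 cross_dot2 cross_dot3)
  then have "P \<in> pline b" "Q \<in> pline b" "R \<in> pline b"
    using in_pline_iff[OF P, of b] in_pline_iff[OF Q, of b] in_pline_iff[OF R, of b] by blast+
  moreover have "pline b \<in> Lines" using bnz unfolding Lines_def by blast
  ultimately show "collinear3 P Q R" unfolding collinear3_def by blast
qed

lemma line_through:
  assumes P: "P \<in> PG2" and Q: "Q \<in> PG2" and PQ: "P \<noteq> Q"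
  shows "\<exists>l\<in>Lines. P \<in> l \<and> Q \<in> l"
proof -
  have "det3 (rep P) (rep Q) (rep P) = 0" by (rule det3_pqp)
  then have "collinear3 P Q P" using collinear_iff P Q PQ by blast
  then show ?thesis unfolding collinear3_def by blast
qed




lemma dot3_comm: "dot3 a v = dot3 v (a::'a::field vec3)"
  by (cases a; cases v) (simp add: dot3_def algebra_simps)

lemma dot3_smult3_left: "dot3 (smult3 c a) v = c * dot3 a (v::'a::field vec3)"
  by (metis dot3_comm dot3_smult3)

lemma ppoint_in_pline_iff:
  assumes v: "v \<noteq> (0,0,0)" shows "ppoint v \<in> pline a \<longleftrightarrow> dot3 a v = 0"
proof
  assume "ppoint v \<in> pline a"
  then show "dot3 a v = 0" using in_ppoint unfolding pline_def by blast
next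
  assume h: "dot3 a v = 0"
  have "\<forall>w\<in>ppoint v. dot3 a w = 0" unfolding ppoint_def using h by (auto simp: dot3_smult3)
  then show "ppoint v \<in> pline a" using ppoint_in_PG2[OF v] unfolding pline_def by blast
qed

lemma parallel_same_line:
  assumes a: "a \<noteq> (0,0,0)" and b: "b \<noteq> (0,0,0)" and c: "cross3 a b = (0,0,(0::'a::field))"
  shows "pline a = pline b"
proof -
  obtain c where c: "c \<noteq> 0" "b = smult3 c a" using cross_zero[OF a b c] by blast
  have "\<And>v. dot3 b v = 0 \<longleftrightarrow> dot3 a v = 0" using c by (simp add: dot3_smult3_left)
  then show ?thesis unfolding pline_def by simp
qed

lemma det_nonzero:
  fixes a1 a2 a3 :: "'a::field vec3"
  assumes nz: "a1 \<noteq> (0,0,0)" "a2 \<noteq> (0,0,0)" "a3 \<noteq> (0,0,0)"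
    and d12: "pline a1 \<noteq> pline a2"
    and conc: "pline a1 \<inter> pline a2 \<inter> pline a3 = {}"
  shows "det3 a1 a2 a3 \<noteq> 0"
proof
  assume D: "det3 a1 a2 a3 = 0"
  define w where "w = cross3 a1 a2"
  have w: "w \<noteq> (0,0,0)" using parallel_same_line nz d12 w_def by metis
  have "dot3 a1 w = 0" "dot3 a2 w = 0" "dot3 a3 w = 0"
    using D unfolding w_def by (simp_all add: dot3_comm[of _ "cross3 a1 a2"] cross_dot1 cross_dot2 cross_dot3)
  then have "ppoint w \<in> pline a1 \<inter> pline a2 \<inter> pline a3" using ppoint_in_pline_iff[OF w] by blast
  then show False using conc by blast
qed

definition ucoord :: "'a::field vec3 \<Rightarrow> 'a vec3 \<Rightarrow> 'a vec3 \<Rightarrow> 'a vec3 \<Rightarrow> 'a vec3" where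
  "ucoord a1 a2 a3 v = (dot3 a1 v, dot3 a2 v, dot3 a3 v)"

lemma det_ucoord:
  "det3 (ucoord a1 a2 a3 p) (ucoord a1 a2 a3 q) (ucoord a1 a2 a3 r) = det3 a1 a2 a3 * det3 p q (r::'a::field vec3)"
proof -
  obtain x1 x2 x3 where 1: "a1 = (x1,x2,x3)" by (cases a1) auto
  obtain y1 y2 y3 where 2: "a2 = (y1,y2,y3)" by (cases a2) auto
  obtain z1 z2 z3 where 3: "a3 = (z1,z2,z3)" by (cases a3) auto
  obtain p1 p2 p3 where 4: "p = (p1,p2,p3)" by (cases p) auto
  obtain q1 q2 q3 where 5: "q = (q1,q2,q3)" by (cases q) auto
  obtain r1 r2 r3 where 6: "r = (r1,r2,r3)" by (cases r) auto
  show ?thesis unfolding 1 2 3 4 5 6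
    by (simp add: ucoord_def det3_def dot3_def cross3_def algebra_simps)
qed

lemma coord_inj:
  fixes a1 a2 a3 v w :: "'a::field vec3"
  assumes D: "det3 a1 a2 a3 \<noteq> 0"
    and h: "dot3 a1 v = c * dot3 a1 w" "dot3 a2 v = c * dot3 a2 w" "dot3 a3 v = c * dot3 a3 w"
  shows "v = smult3 c w"
proof (rule ccontr)
  assume ne: "v \<noteq> smult3 c w"
  obtain v1 v2 v3 where vv: "v = (v1,v2,v3)" by (cases v) auto
  obtain w1 w2 w3 where ww: "w = (w1,w2,w3)" by (cases w) auto
  define b where "b = (v1 - c * w1, v2 - c * w2, v3 - c * w3)"
  have bnz: "b \<noteq> (0,0,0)" using ne unfolding b_def vv ww smult3_def by auto
  have "dot3 b a1 = 0" "dot3 b a2 = 0" "dot3 b a3 = 0"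
    using h unfolding b_def vv ww
    by (cases a1; cases a2; cases a3; simp add: dot3_def algebra_simps)+
  then show False using det3_kernel[OF _ _ _ bnz] D by blast
qed

lemma alg_det:
  fixes p2 p3 q1 q3 r1 r2 :: "'a::field"
  assumes "p2 \<noteq> 0" "q3 \<noteq> 0" "r2 \<noteq> 0"
  shows "det3 (0,p2,p3) (q1,0,q3) (r1,r2,0) = 0 \<longleftrightarrow> (p3/p2)*(q1/q3) = -(r1/r2)"
  using assms by (simp add: det3_def dot3_def cross3_def field_simps) (metis add.commute eq_neg_iff_add_eq_0)




lemma det3_swap12: "det3 a2 a1 a3 = - det3 a1 a2 (a3::'a::field vec3)"
  by (cases a1; cases a2; cases a3) (simp add: det3_def dot3_def cross3_def algebra_simps)
lemma det3_swap23: "det3 a1 a3 a2 = - det3 a1 a2 (a3::'a::field vec3)"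
  by (cases a1; cases a2; cases a3) (simp add: det3_def dot3_def cross3_def algebra_simps)
lemma det3_cyc: "det3 a3 a1 a2 = det3 a1 a2 (a3::'a::field vec3)"
  by (cases a1; cases a2; cases a3) (simp add: det3_def dot3_def cross3_def algebra_simps)

lemma ratio_inj:
  fixes b0 b1 b2 :: "'a::field vec3"
  assumes D: "det3 b0 b1 b2 \<noteq> 0"
    and P: "P \<in> PG2" and P': "P' \<in> PG2"
    and h0: "dot3 b0 (rep P) = 0" "dot3 b0 (rep P') = 0"
    and h2: "dot3 b2 (rep P) \<noteq> 0" "dot3 b2 (rep P') \<noteq> 0"
    and eq: "dot3 b1 (rep P) / dot3 b2 (rep P) = dot3 b1 (rep P') / dot3 b2 (rep P')"
  shows "P = P'"
proof -
  define c where "c = dot3 b2 (rep P') / dot3 b2 (rep P)"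
  have c0: "c \<noteq> 0" using h2 c_def by simp
  have "dot3 b0 (rep P') = c * dot3 b0 (rep P)" using h0 by simp
  moreover have "dot3 b1 (rep P') = c * dot3 b1 (rep P)"
    using eq h2 unfolding c_def by (simp add: field_simps)
  moreover have "dot3 b2 (rep P') = c * dot3 b2 (rep P)"
    using h2 unfolding c_def by (simp add: field_simps)
  ultimately have "rep P' = smult3 c (rep P)" using coord_inj[OF D] by blast
  then show ?thesis using rep[OF P] rep[OF P'] ppoint_smult3[OF c0] by metis
qed

lemma net_unique:
  assumes "dual_3net L1 L2 L3 n" "l \<in> Lines" "i < 3" "j < 3" "k < 3" "i \<noteq> j"
    "l \<inter> [L1,L2,L3] ! i \<noteq> {}" "l \<inter> [L1,L2,L3] ! j \<noteq> {}"
  shows "\<exists>!P. P \<in> l \<inter> [L1,L2,L3] ! k"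
proof -
  have "\<forall>l \<in> Lines. \<forall>i < 3. \<forall>j < 3.
          i \<noteq> j \<and> l \<inter> [L1,L2,L3] ! i \<noteq> {} \<and> l \<inter> [L1,L2,L3] ! j \<noteq> {} \<longrightarrow>
          (\<forall>k < 3. \<exists>!P. P \<in> l \<inter> [L1,L2,L3] ! k)"
    using assms(1) unfolding dual_3net_def Let_def by (elim conjE)
  then show ?thesis using assms(2-) by simp
qed

lemma net_avoid:
  assumes net: "dual_3net L1 L2 L3 n" and n2: "n \<ge> 2" and l: "l \<in> Lines"
    and ij: "i < 3" "j < 3" "i \<noteq> j" and sub: "[L1,L2,L3] ! j \<subseteq> l"
  shows "l \<inter> [L1,L2,L3] ! i = {}"
proof (rule ccontr)
  assume ne: "l \<inter> [L1,L2,L3] ! i \<noteq> {}"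
  have "\<forall>i < 3. [L1,L2,L3] ! i \<subseteq> PG2 \<and> finite ([L1,L2,L3] ! i) \<and> card ([L1,L2,L3] ! i) = n"
    using net unfolding dual_3net_def Let_def by (elim conjE)
  then have c: "card ([L1,L2,L3] ! j) = n" using ij by blast
  then have "[L1,L2,L3] ! j \<noteq> {}" using n2 by auto
  then have "l \<inter> [L1,L2,L3] ! j \<noteq> {}" using sub by auto
  then have "\<exists>!P. P \<in> l \<inter> [L1,L2,L3] ! j" using net_unique[OF net l ij(1,2,2,3) ne] by blast
  then obtain P where "\<forall>Q. Q \<in> [L1,L2,L3] ! j \<longleftrightarrow> Q = P" using sub by blast
  then have "[L1,L2,L3] ! j = {P}" by blast
  then show False using c n2 by simp
qed




theorem proposition4p3:
  fixes L1 L2 L3 :: "'a::alg_closed_field vec3 set set" and n :: nat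
  assumes "triangular_dual_3net L1 L2 L3 n"
  shows "\<exists>H. subgroup H (Kstar :: 'a monoid) \<and> finite H \<and>
           cyclic_group (Kstar\<lparr>carrier := H\<rparr>) \<and>
           realizes L1 L2 L3 (Kstar\<lparr>carrier := H\<rparr>)"
proof -
  have net: "dual_3net L1 L2 L3 n" and n4: "n \<ge> 4" using assms unfolding triangular_dual_3net_def by auto
  obtain l1 l2 l3 where ls: "l1 \<in> Lines" "l2 \<in> Lines" "l3 \<in> Lines"
     "l1 \<noteq> l2" "l1 \<inter> l2 \<inter> l3 = {}" "L1 \<subseteq> l1" "L2 \<subseteq> l2" "L3 \<subseteq> l3"
    using assms unfolding triangular_dual_3net_def by blast
  obtain a1 where a1: "a1 \<noteq> (0,0,0)" "l1 = pline a1" using ls(1) unfolding Lines_def by blast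
  obtain a2 where a2: "a2 \<noteq> (0,0,0)" "l2 = pline a2" using ls(2) unfolding Lines_def by blast
  obtain a3 where a3: "a3 \<noteq> (0,0,0)" "l3 = pline a3" using ls(3) unfolding Lines_def by blast
  have D: "det3 a1 a2 a3 \<noteq> 0" using det_nonzero[OF a1(1) a2(1) a3(1)] a1(2) a2(2) a3(2) ls(4,5) by simp
  have basic: "\<forall>i < 3. [L1,L2,L3] ! i \<subseteq> PG2 \<and> finite ([L1,L2,L3] ! i) \<and> card ([L1,L2,L3] ! i) = n"
    using net unfolding dual_3net_def Let_def by (elim conjE)
  have disj: "\<forall>i < 3. \<forall>j < 3. i \<noteq> j \<longrightarrow> [L1,L2,L3] ! i \<inter> [L1,L2,L3] ! j = {}"
    using net unfolding dual_3net_def Let_def by (elim conjE)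
  have PG: "L1 \<subseteq> PG2" "L2 \<subseteq> PG2" "L3 \<subseteq> PG2" using basic[rule_format, of 0] basic[rule_format, of 1]
      basic[rule_format, of 2] by simp_all
  have fin: "finite L1" "finite L2" "finite L3" using basic[rule_format, of 0] basic[rule_format, of 1]
      basic[rule_format, of 2] by simp_all
  have card: "card L1 = n" "card L2 = n" "card L3 = n" using basic[rule_format, of 0] basic[rule_format, of 1]
      basic[rule_format, of 2] by simp_all
  have dj: "L1 \<inter> L2 = {}" "L1 \<inter> L3 = {}" "L2 \<inter> L3 = {}"
    using disj[rule_format, of 0 1] disj[rule_format, of 0 2] disj[rule_format, of 1 2] by simp_all
  have n2: "n \<ge> 2" using n4 by simp
  have av12: "l2 \<inter> L1 = {}" using net_avoid[OF net n2 ls(2), of 0 1] ls by simp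
  have av13: "l3 \<inter> L1 = {}" using net_avoid[OF net n2 ls(3), of 0 2] ls by simp
  have av21: "l1 \<inter> L2 = {}" using net_avoid[OF net n2 ls(1), of 1 0] ls by simp
  have av23: "l3 \<inter> L2 = {}" using net_avoid[OF net n2 ls(3), of 1 2] ls by simp
  have av31: "l1 \<inter> L3 = {}" using net_avoid[OF net n2 ls(1), of 2 0] ls by simp
  have av32: "l2 \<inter> L3 = {}" using net_avoid[OF net n2 ls(2), of 2 1] ls by simp
  define g1 where "g1 P = dot3 a1 (rep P)" for P
  define g2 where "g2 P = dot3 a2 (rep P)" for P
  define g3 where "g3 P = dot3 a3 (rep P)" for P
  have onl: "P \<in> pline a \<longleftrightarrow> dot3 a (rep P) = 0" if "P \<in> PG2" for P a using in_pline_iff[OF that] .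
  have G1: "g1 P = 0 \<and> g2 P \<noteq> 0 \<and> g3 P \<noteq> 0" if "P \<in> L1" for P
  proof -
    have PP: "P \<in> PG2" using that PG by blast
    have "P \<in> pline a1" using that ls(6) a1(2) by blast
    moreover have "P \<notin> pline a2" using that av12 a2(2) by blast
    moreover have "P \<notin> pline a3" using that av13 a3(2) by blast
    ultimately show ?thesis using in_pline_iff[OF PP] unfolding g1_def g2_def g3_def by simp
  qed
  have G2: "g2 P = 0 \<and> g1 P \<noteq> 0 \<and> g3 P \<noteq> 0" if "P \<in> L2" for P
  proof -
    have PP: "P \<in> PG2" using that PG by blast
    have "P \<in> pline a2" using that ls(7) a2(2) by blast
    moreover have "P \<notin> pline a1" using that av21 a1(2) by blast
    moreover have "P \<notin> pline a3" using that av23 a3(2) by blast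
    ultimately show ?thesis using in_pline_iff[OF PP] unfolding g1_def g2_def g3_def by simp
  qed
  have G3: "g3 P = 0 \<and> g1 P \<noteq> 0 \<and> g2 P \<noteq> 0" if "P \<in> L3" for P
  proof -
    have PP: "P \<in> PG2" using that PG by blast
    have "P \<in> pline a3" using that ls(8) a3(2) by blast
    moreover have "P \<notin> pline a1" using that av31 a1(2) by blast
    moreover have "P \<notin> pline a2" using that av32 a2(2) by blast
    ultimately show ?thesis using in_pline_iff[OF PP] unfolding g1_def g2_def g3_def by simp
  qed
  define f1 where "f1 P = g3 P / g2 P" for P
  define f2 where "f2 P = g1 P / g3 P" for P
  define f3 where "f3 P = - (g1 P / g2 P)" for P
  have colin: "collinear3 P Q R \<longleftrightarrow> f1 P * f2 Q = f3 R" if P: "P \<in> L1" and Q: "Q \<in> L2" and R: "R \<in> L3" for P Q R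
  proof -
    have PQ: "P \<noteq> Q" using P Q dj by blast
    have "collinear3 P Q R \<longleftrightarrow> det3 (rep P) (rep Q) (rep R) = 0"
      using collinear_iff PG P Q R PQ by blast
    also have "\<dots> \<longleftrightarrow> det3 (ucoord a1 a2 a3 (rep P)) (ucoord a1 a2 a3 (rep Q)) (ucoord a1 a2 a3 (rep R)) = 0"
      using D by (simp add: det_ucoord)
    also have "\<dots> \<longleftrightarrow> det3 (0, g2 P, g3 P) (g1 Q, 0, g3 Q) (g1 R, g2 R, 0) = 0"
      using G1[OF P] G2[OF Q] G3[OF R] by (simp add: ucoord_def g1_def g2_def g3_def)
    also have "\<dots> \<longleftrightarrow> f1 P * f2 Q = f3 R"
      unfolding f1_def f2_def f3_def by (rule alg_det) (use G1[OF P] G2[OF Q] G3[OF R] in auto)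
    finally show ?thesis .
  qed
  have inj1: "inj_on f1 L1"
  proof (rule inj_onI)
    fix P P' assume P: "P \<in> L1" and P': "P' \<in> L1" and e: "f1 P = f1 P'"
    have g: "g1 P = 0" "g1 P' = 0" "g2 P \<noteq> 0" "g2 P' \<noteq> 0" using G1[OF P] G1[OF P'] by auto
    show "P = P'"
    proof (rule ratio_inj[of a1 a3 a2])
      show "det3 a1 a3 a2 \<noteq> 0" by (metis D det3_swap23 neg_equal_0_iff_equal)
      show "P \<in> PG2" "P' \<in> PG2" using P P' PG by blast+
      show "dot3 a1 (rep P) = 0" "dot3 a1 (rep P') = 0" "dot3 a2 (rep P) \<noteq> 0" "dot3 a2 (rep P') \<noteq> 0"
        using g unfolding g1_def g2_def g3_def by simp_all
      show "dot3 a3 (rep P) / dot3 a2 (rep P) = dot3 a3 (rep P') / dot3 a2 (rep P')"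
        using e unfolding f1_def g1_def g2_def g3_def by simp
    qed
  qed
  have inj2: "inj_on f2 L2"
  proof (rule inj_onI)
    fix P P' assume P: "P \<in> L2" and P': "P' \<in> L2" and e: "f2 P = f2 P'"
    have g: "g2 P = 0" "g2 P' = 0" "g3 P \<noteq> 0" "g3 P' \<noteq> 0" using G2[OF P] G2[OF P'] by auto
    show "P = P'"
    proof (rule ratio_inj[of a2 a1 a3])
      show "det3 a2 a1 a3 \<noteq> 0" by (metis D det3_swap12 neg_equal_0_iff_equal)
      show "P \<in> PG2" "P' \<in> PG2" using P P' PG by blast+
      show "dot3 a2 (rep P) = 0" "dot3 a2 (rep P') = 0" "dot3 a3 (rep P) \<noteq> 0" "dot3 a3 (rep P') \<noteq> 0"
        using g unfolding g1_def g2_def g3_def by simp_all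
      show "dot3 a1 (rep P) / dot3 a3 (rep P) = dot3 a1 (rep P') / dot3 a3 (rep P')"
        using e unfolding f2_def g1_def g2_def g3_def by simp
    qed
  qed
  have inj3: "inj_on f3 L3"
  proof (rule inj_onI)
    fix P P' assume P: "P \<in> L3" and P': "P' \<in> L3" and e: "f3 P = f3 P'"
    have g: "g3 P = 0" "g3 P' = 0" "g2 P \<noteq> 0" "g2 P' \<noteq> 0" using G3[OF P] G3[OF P'] by auto
    show "P = P'"
    proof (rule ratio_inj[of a3 a1 a2])
      show "det3 a3 a1 a2 \<noteq> 0" by (metis D det3_cyc)
      show "P \<in> PG2" "P' \<in> PG2" using P P' PG by blast+
      show "dot3 a3 (rep P) = 0" "dot3 a3 (rep P') = 0" "dot3 a2 (rep P) \<noteq> 0" "dot3 a2 (rep P') \<noteq> 0"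
        using g unfolding g1_def g2_def g3_def by simp_all
      show "dot3 a1 (rep P) / dot3 a2 (rep P) = dot3 a1 (rep P') / dot3 a2 (rep P')"
        using e unfolding f3_def g1_def g2_def g3_def by simp
    qed
  qed
  have clos: "\<exists>R\<in>L3. f1 P * f2 Q = f3 R" if P: "P \<in> L1" and Q: "Q \<in> L2" for P Q
  proof -
    have PQ: "P \<noteq> Q" using P Q dj by blast
    obtain l where l: "l \<in> Lines" "P \<in> l" "Q \<in> l" using line_through PG P Q PQ by blast
    have "\<exists>!R. R \<in> l \<inter> [L1,L2,L3] ! 2"
      by (rule net_unique[OF net l(1), of 0 1]) (use l P Q in auto)
    then obtain R where R: "R \<in> l" "R \<in> L3" by auto
    then have "collinear3 P Q R" unfolding collinear3_def using l by blast
    then show ?thesis using colin P Q R by blast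
  qed
  obtain H x0 y0 where HH: "finite H" "0 \<notin> H" "1 \<in> H" "\<forall>a\<in>H. \<forall>b\<in>H. a * b \<in> H"
      "x0 \<noteq> 0" "y0 \<noteq> 0" and XH: "f1 ` L1 = (*) x0 ` H" and YH: "f2 ` L2 = (*) y0 ` H"
      and ZH: "f3 ` L3 = (*) (x0 * y0) ` H"
  proof -
    have "\<exists>H x0 y0. finite H \<and> 0 \<notin> H \<and> 1 \<in> H \<and> (\<forall>a\<in>H. \<forall>b\<in>H. a * b \<in> H) \<and>
            x0 \<noteq> 0 \<and> y0 \<noteq> 0 \<and>
            f1 ` L1 = (*) x0 ` H \<and> f2 ` L2 = (*) y0 ` H \<and> f3 ` L3 = (*) (x0 * y0) ` H"
    proof (rule triple_structure)
      show "finite (f1 ` L1)" "finite (f2 ` L2)" "finite (f3 ` L3)" using fin by auto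
      show "card (f1 ` L1) = n" using card inj1 by (simp add: card_image)
      show "card (f2 ` L2) = n" using card inj2 by (simp add: card_image)
      show "card (f3 ` L3) = n" using card inj3 by (simp add: card_image)
      show "n > 0" using n4 by simp
      show "0 \<notin> f1 ` L1" using G1 by (auto simp: f1_def)
      show "0 \<notin> f2 ` L2" using G2 by (auto simp: f2_def)
      fix x y assume "x \<in> f1 ` L1" "y \<in> f2 ` L2"
      then obtain P Q where PQ: "P \<in> L1" "Q \<in> L2" "x = f1 P" "y = f2 Q" by blast
      obtain R where "R \<in> L3" "f1 P * f2 Q = f3 R" using clos[OF PQ(1,2)] by blast
      then show "x * y \<in> f3 ` L3" using PQ by (metis image_eqI)
    qed
    then show ?thesis using that by (elim exE conjE) simp
  qed
  have sg: "subgroup H (Kstar :: 'a monoid)" using subgroup_KstarI HH by blast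
  have grp: "group ((Kstar :: 'a monoid)\<lparr>carrier := H\<rparr>)"
    using subgroup.subgroup_is_group[OF sg group_Kstar] .
  define \<alpha> where "\<alpha> = inv_into L1 f1 \<circ> (*) x0"
  define \<beta> where "\<beta> = inv_into L2 f2 \<circ> (*) y0"
  define \<gamma> where "\<gamma> = inv_into L3 f3 \<circ> (*) (x0 * y0)"
  have bij_mult: "bij_betw ((*) c) H ((*) c ` H)" if "c \<noteq> 0" for c :: 'a
    using that by (auto simp: bij_betw_def inj_on_def)
  have x0y0: "x0 * y0 \<noteq> 0" using HH by simp
  have b1: "bij_betw \<alpha> H L1" unfolding \<alpha>_def
    by (rule bij_betw_trans[OF bij_mult[OF HH(5)]])
       (metis XH bij_betw_inv_into inj1 inj_on_imp_bij_betw)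
  have b2: "bij_betw \<beta> H L2" unfolding \<beta>_def
    by (rule bij_betw_trans[OF bij_mult[OF HH(6)]])
       (metis YH bij_betw_inv_into inj2 inj_on_imp_bij_betw)
  have b3: "bij_betw \<gamma> H L3" unfolding \<gamma>_def
    by (rule bij_betw_trans[OF bij_mult[OF x0y0]])
       (metis ZH bij_betw_inv_into inj3 inj_on_imp_bij_betw)
  have fa: "\<alpha> a \<in> L1 \<and> f1 (\<alpha> a) = x0 * a" if "a \<in> H" for a
  proof -
    have "x0 * a \<in> f1 ` L1" using XH that by auto
    then show ?thesis unfolding \<alpha>_def by (simp add: inv_into_into f_inv_into_f)
  qed
  have fb: "\<beta> a \<in> L2 \<and> f2 (\<beta> a) = y0 * a" if "a \<in> H" for a
  proof -
    have "y0 * a \<in> f2 ` L2" using YH that by auto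
    then show ?thesis unfolding \<beta>_def by (simp add: inv_into_into f_inv_into_f)
  qed
  have fc: "\<gamma> a \<in> L3 \<and> f3 (\<gamma> a) = x0 * y0 * a" if "a \<in> H" for a
  proof -
    have "x0 * y0 * a \<in> f3 ` L3" using ZH that by auto
    then show ?thesis unfolding \<gamma>_def by (simp add: inv_into_into f_inv_into_f)
  qed
  have rel: "a \<otimes>\<^bsub>(Kstar :: 'a monoid)\<lparr>carrier := H\<rparr>\<^esub> b = c \<longleftrightarrow> collinear3 (\<alpha> a) (\<beta> b) (\<gamma> c)"
    if a: "a \<in> H" and b: "b \<in> H" and c: "c \<in> H" for a b c
  proof -
    have "collinear3 (\<alpha> a) (\<beta> b) (\<gamma> c) \<longleftrightarrow> (x0 * a) * (y0 * b) = x0 * y0 * c"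
      using colin[of "\<alpha> a" "\<beta> b" "\<gamma> c"] fa[OF a] fb[OF b] fc[OF c] by simp
    also have "(x0 * a) * (y0 * b) = (x0 * y0) * (a * b)" by (simp add: ac_simps)
    also have "(x0 * y0) * (a * b) = x0 * y0 * c \<longleftrightarrow> a * b = c" using x0y0 by simp
    finally show ?thesis by (simp add: Kstar_def)
  qed
  have "realizes L1 L2 L3 ((Kstar :: 'a monoid)\<lparr>carrier := H\<rparr>)"
    unfolding realizes_def using grp b1 b2 b3 rel by (intro conjI exI[of _ \<alpha>] exI[of _ \<beta>] exI[of _ \<gamma>]) auto
  moreover have "cyclic_group ((Kstar :: 'a monoid)\<lparr>carrier := H\<rparr>)"
    using cyclic_finite_subgroup_Kstar[OF sg HH(1)] .
  ultimately show ?thesis using sg HH(1) by blast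
qed


end
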